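(* Let $\mathcal{A}=\{1,\dots,N\}$, $\boldsymbol{\lambda}\in\mathbb{R}_+^N$, $\boldsymbol{\delta}\in\mathbb{R}^N$ with $\delta_i>0$, $B\in\mathbb{R}_+^{N\times N}$ with zero diagonal whose associated directed graph is weakly connected but not strongly connected, $\mathcal{S}\subset\mathbb{R}_+^N$ convex, and $q_i:\mathbb{R}_+\to(0,1]$ decreasing, strictly convex, continuously differentiable. For $\mathbf{s}\in\mathcal{S}$ and $\epsilon\ge0$ define $$\mathbf{g}^{\mathbf{s}}(\epsilon,\mathbf{p})=(\mathbf{1}-\mathbf{p})\circ(\boldsymbol{\lambda}+\epsilon\mathbf{1}+B\mathbf{p})-\mathbf{q}(\mathbf{s})^{-1}\circ\boldsymbol{\delta}\circ\mathbf{p},$$ so that $$\partial_{\mathbf{p}}\mathbf{g}^{\mathbf{s}}(\epsilon,\mathbf{p})=\mathrm{diag}(\mathbf{1}-\mathbf{p})B-\mathrm{diag}\big(\mathbf{q}(\mathbf{s})^{-1}\circ\boldsymbol{\delta}+\boldsymbol{\lambda}+\epsilon\mathbf{1}+B\mathbf{p}\big).$$ For $\epsilon>0$ let $\bar{\mathbf{p}}^\epsilon(\mathbf{s})>\mathbf{0}$ be the unique strictly positive solution of $\mathbf{g}^{\mathbf{s}}(\epsilon,\mathbf{p})=\mathbf{0}$. Then for every $\epsilon>0$, the matrix $-\partial_{\mathbf{p}}\mathbf{g}^{\mathbf{s}}(\epsilon,\bar{\mathbf{p}}^\epsilon(\mathbf{s}))$ is a nonsingular M-matrix.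
   Context: $\circ$ is the element-wise product; $\mathbf{q}(\mathbf{s})=(q_i(s_i))_i$, $\mathbf{q}(\mathbf{s})^{-1}$ its element-wise inverse; $\mathrm{diag}(\mathbf{x})$ is the diagonal matrix with diagonal $\mathbf{x}$. A Z-matrix is a square matrix with nonpositive off-diagonal and nonnegative diagonal entries; an M-matrix is a Z-matrix of the form $sI-C$ with $C$ entrywise nonnegative and $s\ge\rho(C)$ (spectral radius). The associated graph has an edge $(j,i)$ iff $b_{i,j}>0$. *)

theory Defs
  imports "Jordan_Normal_Form.Spectral_Radius"
begin

text \<open>Vertices are indexed 0..N-1 (paper: 1..N). The associated directed graph of B
  has an edge (j,i) iff B(i,j) > 0.\<close>

definition assoc_edges :: "nat \<Rightarrow> real mat \<Rightarrow> (nat \<times> nat) set" where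
  "assoc_edges N B = {(j, i). j < N \<and> i < N \<and> B $$ (i, j) > 0}"

definition strongly_connected_graph :: "nat \<Rightarrow> real mat \<Rightarrow> bool" where
  "strongly_connected_graph N B \<longleftrightarrow>
     (\<forall>i<N. \<forall>j<N. (i, j) \<in> (assoc_edges N B)\<^sup>*)"

definition weakly_connected_graph :: "nat \<Rightarrow> real mat \<Rightarrow> bool" where
  "weakly_connected_graph N B \<longleftrightarrow>
     (\<forall>i<N. \<forall>j<N. (i, j) \<in> (assoc_edges N B \<union> (assoc_edges N B)\<inverse>)\<^sup>*)"

definition convex_vec_set :: "real vec set \<Rightarrow> bool" where
  "convex_vec_set S \<longleftrightarrow>
     (\<forall>x\<in>S. \<forall>y\<in>S. \<forall>t::real. 0 \<le> t \<and> t \<le> 1 \<longrightarrow> t \<cdot>\<^sub>v x + (1 - t) \<cdot>\<^sub>v y \<in> S)"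

definition strictly_convex_on :: "real set \<Rightarrow> (real \<Rightarrow> real) \<Rightarrow> bool" where
  "strictly_convex_on A f \<longleftrightarrow>
     (\<forall>x\<in>A. \<forall>y\<in>A. \<forall>t::real. x \<noteq> y \<and> 0 < t \<and> t < 1 \<longrightarrow>
        f (t * x + (1 - t) * y) < t * f x + (1 - t) * f y)"

definition g_map :: "nat \<Rightarrow> real vec \<Rightarrow> real vec \<Rightarrow> real mat \<Rightarrow> (nat \<Rightarrow> real \<Rightarrow> real)
    \<Rightarrow> real vec \<Rightarrow> real \<Rightarrow> real vec \<Rightarrow> real vec" where
  "g_map N lam del B q s eps p = vec N (\<lambda>i.
     (1 - p $ i) * (lam $ i + eps + (B *\<^sub>v p) $ i) - del $ i / q i (s $ i) * p $ i)"

definition g_jac :: "nat \<Rightarrow> real vec \<Rightarrow> real vec \<Rightarrow> real mat \<Rightarrow> (nat \<Rightarrow> real \<Rightarrow> real)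
    \<Rightarrow> real vec \<Rightarrow> real \<Rightarrow> real vec \<Rightarrow> real mat" where
  "g_jac N lam del B q s eps p = mat N N (\<lambda>(i, j).
     (1 - p $ i) * B $$ (i, j)
     - (if i = j then del $ i / q i (s $ i) + lam $ i + eps + (B *\<^sub>v p) $ i else 0))"

definition nonneg_mat :: "real mat \<Rightarrow> bool" where
  "nonneg_mat C \<longleftrightarrow> (\<forall>i<dim_row C. \<forall>j<dim_col C. C $$ (i, j) \<ge> 0)"

definition M_matrix :: "nat \<Rightarrow> real mat \<Rightarrow> bool" where
  "M_matrix n A \<longleftrightarrow> (\<exists>s C. C \<in> carrier_mat n n \<and> nonneg_mat C \<and>
      s \<ge> spectral_radius (map_mat complex_of_real C) \<and> A = s \<cdot>\<^sub>m 1\<^sub>m n - C)"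

definition nonsingular_M_matrix :: "nat \<Rightarrow> real mat \<Rightarrow> bool" where
  "nonsingular_M_matrix n A \<longleftrightarrow> M_matrix n A \<and> det A \<noteq> 0"

end

theory Submission imports Defs begin

lemma mv_sum: "M \<in> carrier_mat n m \<Longrightarrow> v \<in> carrier_vec m \<Longrightarrow> i < n \<Longrightarrow>
  (M *\<^sub>v v) $ i = (\<Sum>j<m. M $$ (i, j) * v $ j)"
  by (simp add: scalar_prod_def lessThan_atLeast0)

lemma key:
  fixes C :: "real mat" and p :: "real vec" and v :: "nat \<Rightarrow> complex" and \<mu> :: complex
  assumes Cnn: "\<forall>i<n. \<forall>j<n. C $$ (i, j) \<ge> 0" and pp: "\<forall>i<n. p $ i > 0"
    and Cp: "\<forall>i<n. (\<Sum>j<n. C $$ (i, j) * p $ j) < s * p $ i"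
    and ev: "\<forall>i<n. \<mu> * v i = (\<Sum>j<n. of_real (C $$ (i, j)) * v j)"
    and nz: "\<exists>i<n. v i \<noteq> 0"
  shows "cmod \<mu> < s"
proof -
  define t where "t = Max ((\<lambda>j. cmod (v j) / p $ j) ` {..<n})"
  have ne: "{..<n} \<noteq> {}" using nz by auto
  obtain i where i: "i < n" "t = cmod (v i) / p $ i"
  proof -
    have "t \<in> (\<lambda>j. cmod (v j) / p $ j) ` {..<n}" unfolding t_def using ne by (intro Max_in) auto
    then obtain j where "j < n" "t = cmod (v j) / p $ j" by auto
    thus ?thesis using that by blast
  qed
  have tb: "cmod (v j) \<le> t * p $ j" if "j < n" for j
  proof -
    have "cmod (v j) / p $ j \<le> t" unfolding t_def using that by (intro Max_ge) auto
    thus ?thesis using pp that by (simp add: divide_le_eq)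
  qed
  obtain k where k: "k < n" "v k \<noteq> 0" using nz by auto
  have "0 < cmod (v k) / p $ k" using k pp by auto
  also have "\<dots> \<le> t" unfolding t_def using k by (intro Max_ge) auto
  finally have tpos: "t > 0" .
  have vi: "cmod (v i) = t * p $ i" using i pp by auto
  have "cmod \<mu> * cmod (v i) = cmod (\<Sum>j<n. of_real (C $$ (i, j)) * v j)"
    using ev i by (metis norm_mult)
  also have "\<dots> \<le> (\<Sum>j<n. cmod (of_real (C $$ (i, j)) * v j))" by (rule norm_sum)
  also have "\<dots> = (\<Sum>j<n. C $$ (i, j) * cmod (v j))"
    using Cnn i by (intro sum.cong) (auto simp: norm_mult)
  also have "\<dots> \<le> (\<Sum>j<n. C $$ (i, j) * (t * p $ j))"
    using Cnn i tb by (intro sum_mono mult_left_mono) auto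
  also have "\<dots> = t * (\<Sum>j<n. C $$ (i, j) * p $ j)"
    by (simp add: sum_distrib_left algebra_simps)
  also have "\<dots> < t * (s * p $ i)" using Cp i tpos by (intro mult_strict_left_mono) auto
  also have "\<dots> = s * cmod (v i)" using vi by simp
  finally have "cmod \<mu> * cmod (v i) < s * cmod (v i)" .
  moreover have "cmod (v i) > 0" using vi tpos pp i by auto
  ultimately show ?thesis by simp
qed

theorem lemma2:
  fixes N :: nat and lam del s pbar :: "real vec" and B :: "real mat"
    and S :: "real vec set" and q :: "nat \<Rightarrow> real \<Rightarrow> real" and eps :: real
  assumes lam: "lam \<in> carrier_vec N" "\<forall>i<N. lam $ i \<ge> 0"
    and del: "del \<in> carrier_vec N" "\<forall>i<N. del $ i > 0"
    and B: "B \<in> carrier_mat N N" "\<forall>i<N. \<forall>j<N. B $$ (i, j) \<ge> 0" "\<forall>i<N. B $$ (i, i) = 0"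
    and weak: "weakly_connected_graph N B"
    and not_strong: "\<not> strongly_connected_graph N B"
    and S: "S \<subseteq> carrier_vec N" "\<forall>x\<in>S. \<forall>i<N. x $ i \<ge> 0" "convex_vec_set S"
    and q_range: "\<forall>i<N. \<forall>x\<ge>0. 0 < q i x \<and> q i x \<le> 1"
    and q_decr: "\<forall>i<N. \<forall>x y. 0 \<le> x \<and> x \<le> y \<longrightarrow> q i y \<le> q i x"
    and q_sconv: "\<forall>i<N. strictly_convex_on {0..} (q i)"
    and q_C1: "\<forall>i<N. \<exists>q'. continuous_on {0..} q' \<and>
                 (\<forall>x\<ge>0. (q i has_real_derivative q' x) (at x within {0..}))"
    and s: "s \<in> S"
    and eps: "eps > 0"
    and pbar: "pbar \<in> carrier_vec N" "\<forall>i<N. pbar $ i > 0"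
              "g_map N lam del B q s eps pbar = 0\<^sub>v N"
    and pbar_unique: "\<forall>p\<in>carrier_vec N. (\<forall>i<N. p $ i > 0) \<and> g_map N lam del B q s eps p = 0\<^sub>v N
                          \<longrightarrow> p = pbar"
  shows "nonsingular_M_matrix N (- g_jac N lam del B q s eps pbar)"
proof -
  define p where "p = pbar"
  define Bp where "Bp i = (\<Sum>j<N. B $$ (i, j) * p $ j)" for i
  define d where "d i = del $ i / q i (s $ i) + lam $ i + eps + Bp i" for i
  have pc: "p \<in> carrier_vec N" using pbar p_def by simp
  have pp: "\<forall>i<N. p $ i > 0" using pbar p_def by simp
  have Bpv: "(B *\<^sub>v p) $ i = Bp i" if "i < N" for i
    using mv_sum[OF B(1) pc that] Bp_def by simp
  have Bp0: "Bp i \<ge> 0" if "i < N" for i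
    unfolding Bp_def using B(2) pp that by (intro sum_nonneg) (auto intro: less_imp_le)
  have sN: "s \<in> carrier_vec N" "\<forall>i<N. s $ i \<ge> 0" using s S by auto
  have qpos: "q i (s $ i) > 0" if "i < N" for i using q_range sN that by auto
  have geq: "(1 - p $ i) * (lam $ i + eps + Bp i) = del $ i / q i (s $ i) * p $ i" if "i < N" for i
  proof -
    have "g_map N lam del B q s eps pbar $ i = 0" using pbar(3) that by simp
    thus ?thesis using that Bpv[OF that] unfolding g_map_def p_def by simp
  qed
  have p1: "p $ i < 1" if "i < N" for i
  proof -
    have "del $ i / q i (s $ i) * p $ i > 0" using del qpos[OF that] pp that by auto
    hence "(1 - p $ i) * (lam $ i + eps + Bp i) > 0" using geq[OF that] by simp
    moreover have "lam $ i + eps + Bp i > 0" using lam eps Bp0[OF that] that by (smt (verit))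
    ultimately show ?thesis by (simp add: zero_less_mult_iff)
  qed
  have dpos: "d i > 0" if "i < N" for i
    unfolding d_def using del qpos[OF that] lam eps Bp0[OF that] that
    by (smt (verit) divide_pos_pos)
  define s0 where "s0 = (\<Sum>i<N. d i) + 1"
  have s0d: "d i < s0" if "i < N" for i
  proof -
    have "d i \<le> (\<Sum>i<N. d i)" using that dpos by (intro member_le_sum) (auto intro: less_imp_le)
    thus ?thesis unfolding s0_def by simp
  qed
  define C where "C = mat N N (\<lambda>(i, j). (1 - p $ i) * B $$ (i, j) + (if i = j then s0 - d i else 0))"
  have Cc: "C \<in> carrier_mat N N" unfolding C_def by simp
  have Cnn: "\<forall>i<N. \<forall>j<N. C $$ (i, j) \<ge> 0"
  proof (intro allI impI)
    fix i j assume ij: "i < N" "j < N"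
    have "(1 - p $ i) * B $$ (i, j) \<ge> 0" using p1[OF ij(1)] B(2) ij by simp
    moreover have "s0 - d i \<ge> 0" using s0d[OF ij(1)] by simp
    ultimately show "C $$ (i, j) \<ge> 0" unfolding C_def using ij by (cases "i = j") auto
  qed
  have nnC: "nonneg_mat C" unfolding nonneg_mat_def using Cnn Cc by auto
  have Aeq: "- g_jac N lam del B q s eps pbar = s0 \<cdot>\<^sub>m 1\<^sub>m N - C"
    by (rule eq_matI) (auto simp: C_def g_jac_def d_def Bpv[unfolded p_def] p_def)
  have Cp: "\<forall>i<N. (\<Sum>j<N. C $$ (i, j) * p $ j) < s0 * p $ i"
  proof (intro allI impI)
    fix i assume i: "i < N"
    have "(\<Sum>j<N. C $$ (i, j) * p $ j) = (\<Sum>j<N. (1 - p $ i) * (B $$ (i, j) * p $ j) + (if i = j then (s0 - d i) * p $ j else 0))"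
      using i unfolding C_def by (intro sum.cong) (auto simp: algebra_simps)
    also have "\<dots> = (1 - p $ i) * Bp i + (s0 - d i) * p $ i"
      using i by (simp add: sum.distrib sum_distrib_left Bp_def)
    also have "\<dots> < s0 * p $ i"
    proof -
      have e: "d i * p $ i = (1 - p $ i) * (lam $ i + eps + Bp i) + (lam $ i + eps + Bp i) * p $ i"
      proof -
        have "d i * p $ i = del $ i / q i (s $ i) * p $ i + (lam $ i + eps + Bp i) * p $ i"
          unfolding d_def by (simp add: ring_distribs)
        thus ?thesis using geq[OF i] by simp
      qed
      have "(lam $ i + eps + Bp i) * p $ i > 0" using lam eps Bp0[OF i] i pp
        by (intro mult_pos_pos) (smt (verit), auto)
      moreover have "(1 - p $ i) * (lam $ i + eps) \<ge> 0" using p1[OF i] lam eps i by simp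
      ultimately show ?thesis using e by (simp add: algebra_simps)
    qed
    finally show "(\<Sum>j<N. C $$ (i, j) * p $ j) < s0 * p $ i" .
  qed
  have N0: "N > 0"
  proof (rule ccontr)
    assume "\<not> N > 0"
    hence "strongly_connected_graph N B" unfolding strongly_connected_graph_def by simp
    thus False using not_strong by simp
  qed
  let ?Cc = "map_mat complex_of_real C"
  have CcC: "?Cc \<in> carrier_mat N N" using Cc by simp
  have spec: "cmod k < s0" if k: "k \<in> spectrum ?Cc" for k
  proof -
    obtain v where v: "eigenvector ?Cc v k" using k unfolding spectrum_def eigenvalue_def by auto
    have vc: "v \<in> carrier_vec N" and vnz: "v \<noteq> 0\<^sub>v N" and ev: "?Cc *\<^sub>v v = k \<cdot>\<^sub>v v"
      using v Cc unfolding eigenvector_def by auto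
    show ?thesis
    proof (rule key[OF Cnn pp Cp, of k "\<lambda>j. v $ j"])
      show "\<forall>i<N. k * v $ i = (\<Sum>j<N. complex_of_real (C $$ (i, j)) * v $ j)"
      proof (intro allI impI)
        fix i assume i: "i < N"
        have "k * v $ i = (?Cc *\<^sub>v v) $ i" using ev i vc by simp
        also have "\<dots> = (\<Sum>j<N. ?Cc $$ (i, j) * v $ j)" by (rule mv_sum[OF CcC vc i])
        also have "\<dots> = (\<Sum>j<N. complex_of_real (C $$ (i, j)) * v $ j)"
          using i Cc by (intro sum.cong) auto
        finally show "k * v $ i = (\<Sum>j<N. complex_of_real (C $$ (i, j)) * v $ j)" .
      qed
      show "\<exists>i<N. v $ i \<noteq> 0"
      proof (rule ccontr)
        assume "\<not> (\<exists>i<N. v $ i \<noteq> 0)"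
        hence "v = 0\<^sub>v N" using vc by (intro eq_vecI) auto
        thus False using vnz by simp
      qed
    qed
  qed
  have rad: "spectral_radius ?Cc \<le> s0"
  proof -
    have "spectral_radius ?Cc \<in> norm ` spectrum ?Cc" by (rule spectral_radius_mem_max(1)[OF CcC N0])
    thus ?thesis using spec by fastforce
  qed
  have M: "M_matrix N (- g_jac N lam del B q s eps pbar)"
    unfolding M_matrix_def using Cc nnC rad Aeq by blast
  have Ac: "s0 \<cdot>\<^sub>m 1\<^sub>m N - C \<in> carrier_mat N N" using Cc by (intro minus_carrier_mat) auto
  have det: "det (s0 \<cdot>\<^sub>m 1\<^sub>m N - C) \<noteq> 0"
  proof
    assume "det (s0 \<cdot>\<^sub>m 1\<^sub>m N - C) = 0"
    then obtain v where vc: "v \<in> carrier_vec N" and vnz: "v \<noteq> 0\<^sub>v N"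
      and Av: "(s0 \<cdot>\<^sub>m 1\<^sub>m N - C) *\<^sub>v v = 0\<^sub>v N"
      using det_0_iff_vec_prod_zero[OF Ac] by auto
    have "cmod (complex_of_real s0) < s0"
    proof (rule key[OF Cnn pp Cp, of _ "\<lambda>j. complex_of_real (v $ j)"])
      show "\<forall>i<N. complex_of_real s0 * complex_of_real (v $ i) = (\<Sum>j<N. complex_of_real (C $$ (i, j)) * complex_of_real (v $ j))"
      proof (intro allI impI)
        fix i assume i: "i < N"
        have "0 = ((s0 \<cdot>\<^sub>m 1\<^sub>m N - C) *\<^sub>v v) $ i" using Av i by simp
        also have "\<dots> = (\<Sum>j<N. (s0 \<cdot>\<^sub>m 1\<^sub>m N - C) $$ (i, j) * v $ j)" by (rule mv_sum[OF Ac vc i])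
        also have "\<dots> = (\<Sum>j<N. (if i = j then s0 * v $ j else 0) - C $$ (i, j) * v $ j)"
          using i Cc by (intro sum.cong) (auto simp: algebra_simps)
        also have "\<dots> = s0 * v $ i - (\<Sum>j<N. C $$ (i, j) * v $ j)"
          using i by (simp add: sum_subtractf)
        finally have "s0 * v $ i = (\<Sum>j<N. C $$ (i, j) * v $ j)" by simp
        hence "complex_of_real (s0 * v $ i) = complex_of_real (\<Sum>j<N. C $$ (i, j) * v $ j)" by simp
        thus "complex_of_real s0 * complex_of_real (v $ i) = (\<Sum>j<N. complex_of_real (C $$ (i, j)) * complex_of_real (v $ j))"
          by (simp add: of_real_sum)
      qed
      show "\<exists>i<N. complex_of_real (v $ i) \<noteq> 0"
      proof (rule ccontr)
        assume "\<not> (\<exists>i<N. complex_of_real (v $ i) \<noteq> 0)"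
        hence "v = 0\<^sub>v N" using vc by (intro eq_vecI) auto
        thus False using vnz by simp
      qed
    qed
    thus False by simp
  qed
  show ?thesis unfolding nonsingular_M_matrix_def using M det Aeq by simp
qed

end
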